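(* For every recognizable language $L$, the minimal compact automaton $\mathcal A_c(L)$ is obtained, up to isomorphism, from the minimal deterministic automaton $\mathcal A(L)$ (viewed as a compact automaton with edges labelled by letters) by a finite sequence of elementary reductions.
   Context: A compact automaton $(Q,E,I,T)$ has edges $E\subseteq Q\times A^+\times Q$, initial states $I$ and terminal states $T$. It is deterministic if $|I|=1$ and the labels of the edges leaving any state begin with pairwise distinct letters. It is trim if every state lies on a path from $I$ to $T$. A state is special if it is initial or terminal, or if it has two outgoing edges whose labels begin with distinct letters. Elementary reduction: let $\mathcal A=(Q,i,T)$ be a trim deterministic compact automaton and let $q$ be a non-special state. Then $q$ has a unique outgoing edge $q\xrightarrow{v}r$, with $r\ne q$, and $q\neq i$. The elementary reduction of $\mathcal A$ at $q$ is the compact automaton with states $Q\setminus\{q\}$, initial state $i$, terminal states $T$, and edges: (i) the edges $(p,w,r')$ of $\mathcal A$ with $p,r'\neq q$; (ii) the edges $(p,uv,r)$ for every edge $(p,u,q)$ of $\mathcal A$. $\mathcal A(L)$ is the minimal deterministic automaton of $L$, whose states are the nonempty residuals $u^{-1}L=\{v\mid uv\in L\}$. $\mathcal A_c(L)$ is defined as follows: - its states are the special residuals of $L$, i.e. nonempty residuals $u^{-1}L$ such that $u=1$, or $u\in L$, or $u^{-1}L$ contains two words beginning with different letters; - its initial state is $L$; - its terminal states are the $u^{-1}L$ with $u\in L$; - its edges are the $(u^{-1}L,v,(uv)^{-1}L)$ with $v$ nonempty, where both residuals are special and no factorization $v=v'v''$ with $v',v''$ nonempty has $(uv')^{-1}L$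 special. *)

theory Defs
  imports Main
begin

record ('s, 'a) cauto =
  cstates :: "'s set"
  cedges  :: "('s \<times> 'a list \<times> 's) set"
  cinit   :: "'s set"
  cterm   :: "'s set"

definition wf_cauto :: "('s, 'a) cauto \<Rightarrow> bool" where
  "wf_cauto A \<longleftrightarrow>
     (\<forall>(p, u, q) \<in> cedges A. p \<in> cstates A \<and> q \<in> cstates A \<and> u \<noteq> []) \<and>
     cinit A \<subseteq> cstates A \<and> cterm A \<subseteq> cstates A"

definition deterministic :: "('s, 'a) cauto \<Rightarrow> bool" where
  "deterministic A \<longleftrightarrow> card (cinit A) = 1 \<and>
     (\<forall>e1 \<in> cedges A. \<forall>e2 \<in> cedges A.
        fst e1 = fst e2 \<and> e1 \<noteq> e2 \<longrightarrow> hd (fst (snd e1)) \<noteq> hd (fst (snd e2)))"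

inductive reach :: "('s, 'a) cauto \<Rightarrow> 's \<Rightarrow> 's \<Rightarrow> bool" for A where
  refl: "p \<in> cstates A \<Longrightarrow> reach A p p"
| step: "(p, u, r) \<in> cedges A \<Longrightarrow> reach A r q \<Longrightarrow> reach A p q"

definition trim :: "('s, 'a) cauto \<Rightarrow> bool" where
  "trim A \<longleftrightarrow> (\<forall>q \<in> cstates A. \<exists>i \<in> cinit A. \<exists>t \<in> cterm A. reach A i q \<and> reach A q t)"

definition special_state :: "('s, 'a) cauto \<Rightarrow> 's \<Rightarrow> bool" where
  "special_state A q \<longleftrightarrow> q \<in> cinit A \<or> q \<in> cterm A \<or>
     (\<exists>u r v r'. (q, u, r) \<in> cedges A \<and> (q, v, r') \<in> cedges A \<and> hd u \<noteq> hd v)"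

definition elem_red_at :: "('s, 'a) cauto \<Rightarrow> 's \<Rightarrow> ('s, 'a) cauto \<Rightarrow> bool" where
  "elem_red_at A q B \<longleftrightarrow>
     wf_cauto A \<and> trim A \<and> deterministic A \<and> q \<in> cstates A \<and> \<not> special_state A q \<and>
     (\<exists>v r. (q, v, r) \<in> cedges A \<and>
        B = \<lparr> cstates = cstates A - {q},
              cedges = {(p, w, r'). (p, w, r') \<in> cedges A \<and> p \<noteq> q \<and> r' \<noteq> q}
                       \<union> {(p, u @ v, r) | p u. (p, u, q) \<in> cedges A},
              cinit = cinit A,
              cterm = cterm A \<rparr>)"

definition elem_red :: "('s, 'a) cauto \<Rightarrow> ('s, 'a) cauto \<Rightarrow> bool" where
  "elem_red A B \<longleftrightarrow> (\<exists>q. elem_red_at A q B)"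

definition cauto_iso :: "('s, 'a) cauto \<Rightarrow> ('t, 'a) cauto \<Rightarrow> bool" where
  "cauto_iso A B \<longleftrightarrow> (\<exists>f. bij_betw f (cstates A) (cstates B) \<and>
      f ` cinit A = cinit B \<and> f ` cterm A = cterm B \<and>
      cedges B = (\<lambda>(p, u, q). (f p, u, f q)) ` cedges A)"

definition resid :: "'a list set \<Rightarrow> 'a list \<Rightarrow> 'a list set" where
  "resid L u = {v. u @ v \<in> L}"

definition recognizable :: "'a list set \<Rightarrow> bool" where
  "recognizable L \<longleftrightarrow> (\<exists>(Q :: nat set) (\<delta> :: nat \<Rightarrow> 'a \<Rightarrow> nat) q0 F.
     finite Q \<and> q0 \<in> Q \<and> (\<forall>q \<in> Q. \<forall>a. \<delta> q a \<in> Q) \<and> F \<subseteq> Q \<and>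
     L = {w. foldl \<delta> q0 w \<in> F})"

definition minA :: "'a list set \<Rightarrow> ('a list set, 'a) cauto" where
  "minA L = \<lparr> cstates = {resid L u | u. resid L u \<noteq> {}},
             cedges = {(resid L u, [a], resid L (u @ [a])) | u a. resid L (u @ [a]) \<noteq> {}},
             cinit = {X. X = L \<and> L \<noteq> {}},
             cterm = {resid L u | u. u \<in> L} \<rparr>"

definition special_resid :: "'a list set \<Rightarrow> 'a list set \<Rightarrow> bool" where
  "special_resid L X \<longleftrightarrow> (\<exists>u. X = resid L u \<and> X \<noteq> {} \<and>
     (u = [] \<or> u \<in> L \<or> (\<exists>a b x y. a \<noteq> b \<and> a # x \<in> X \<and> b # y \<in> X)))"

definition minAc :: "'a list set \<Rightarrow> ('a list set, 'a) cauto" where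
  "minAc L = \<lparr> cstates = {X. special_resid L X},
              cedges = {(resid L u, v, resid L (u @ v)) | u v. v \<noteq> [] \<and>
                           special_resid L (resid L u) \<and> special_resid L (resid L (u @ v)) \<and>
                           (\<forall>v' v''. v = v' @ v'' \<and> v' \<noteq> [] \<and> v'' \<noteq> [] \<longrightarrow>
                               \<not> special_resid L (resid L (u @ v')))},
              cinit = {X. X = L \<and> L \<noteq> {}},
              cterm = {resid L u | u. u \<in> L} \<rparr>"

end

theory Submission
  imports Defs "HOL-Library.Sublist"
begin

definition Sall :: "'a list set \<Rightarrow> 'a list set set" where
  "Sall L = {X. \<exists>u. X = resid L u \<and> X \<noteq> {}}"

definition Ssp :: "'a list set \<Rightarrow> 'a list set set" where
  "Ssp L = {X. special_resid L X}"

definition EE :: "'a list set set \<Rightarrow> ('a list set \<times> 'a list \<times> 'a list set) set" where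
  "EE S = {(X, v, resid X v) | X v. X \<in> S \<and> v \<noteq> [] \<and> resid X v \<in> S \<and>
     (\<forall>v' v''. v = v' @ v'' \<and> v' \<noteq> [] \<and> v'' \<noteq> [] \<longrightarrow> resid X v' \<notin> S)}"

definition aut :: "'a list set \<Rightarrow> 'a list set set \<Rightarrow> ('a list set, 'a) cauto" where
  "aut L S = \<lparr> cstates = S, cedges = EE S, cinit = {X. X = L \<and> L \<noteq> {}},
              cterm = {resid L u | u. u \<in> L} \<rparr>"

lemma resid_append: "resid L (u @ v) = resid (resid L u) v"
  by (simp add: resid_def)

lemma resid_Nil[simp]: "resid L [] = L"
  by (simp add: resid_def)

lemma mem_resid: "w \<in> resid X v \<longleftrightarrow> v @ w \<in> X"
  by (simp add: resid_def)

lemma special_intro: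
  assumes "X = resid L u" "X \<noteq> {}"
    "X = L \<or> [] \<in> X \<or> (\<exists>a b x y. a \<noteq> b \<and> a # x \<in> X \<and> b # y \<in> X)"
  shows "special_resid L X"
  using assms unfolding special_resid_def
  by (metis append_Nil2 mem_resid resid_Nil)

lemma special_elim:
  assumes "special_resid L X"
  shows "X \<in> Sall L \<and> (X = L \<or> [] \<in> X \<or> (\<exists>a b x y. a \<noteq> b \<and> a # x \<in> X \<and> b # y \<in> X))"
  using assms unfolding special_resid_def Sall_def
  by (auto simp: mem_resid)

lemma first_hit:
  "w \<noteq> [] \<Longrightarrow> P w \<Longrightarrow> \<exists>v w'. w = v @ w' \<and> v \<noteq> [] \<and> P v \<and>
     (\<forall>v' v''. v = v' @ v'' \<and> v' \<noteq> [] \<and> v'' \<noteq> [] \<longrightarrow> \<not> P v')"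
proof (induction "length w" arbitrary: w rule: less_induct)
  case less
  show ?case
  proof (cases "\<exists>v' v''. w = v' @ v'' \<and> v' \<noteq> [] \<and> v'' \<noteq> [] \<and> P v'")
    case True
    then obtain v' v'' where h: "w = v' @ v''" "v' \<noteq> []" "v'' \<noteq> []" "P v'" by blast
    have "length v' < length w" using h by simp
    from less(1)[OF this h(2) h(4)] obtain v w1 where
      "v' = v @ w1" "v \<noteq> []" "P v"
      "\<forall>v1 v2. v = v1 @ v2 \<and> v1 \<noteq> [] \<and> v2 \<noteq> [] \<longrightarrow> \<not> P v1" by blast
    then show ?thesis using h by (intro exI[of _ v] exI[of _ "w1 @ v''"]) auto
  next
    case False
    then show ?thesis using less by (intro exI[of _ w] exI[of _ "[]"]) auto
  qed
qed

lemma EE_D: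
  assumes "(X, v, Y) \<in> EE S"
  shows "X \<in> S" "v \<noteq> []" "resid X v \<in> S" "Y = resid X v"
    "\<And>v' v''. v = v' @ v'' \<Longrightarrow> v' \<noteq> [] \<Longrightarrow> v'' \<noteq> [] \<Longrightarrow> resid X v' \<notin> S"
  using assms by (auto simp: EE_def)

lemma EE_I:
  assumes "X \<in> S" "v \<noteq> []" "resid X v \<in> S"
    "\<And>v' v''. v = v' @ v'' \<Longrightarrow> v' \<noteq> [] \<Longrightarrow> v'' \<noteq> [] \<Longrightarrow> resid X v' \<notin> S"
  shows "(X, v, resid X v) \<in> EE S"
  using assms unfolding EE_def by blast

lemma det_EE:
  assumes sub: "Ssp L \<subseteq> S" "S \<subseteq> Sall L"
    and e1: "(X, v1, Y1) \<in> EE S" and e2: "(X, v2, Y2) \<in> EE S" and h: "hd v1 = hd v2"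
  shows "v1 = v2 \<and> Y1 = Y2"
proof -
  note d1 = EE_D[OF e1] and d2 = EE_D[OF e2]
  have ne1: "resid X v1 \<noteq> {}" using d1(3) sub by (auto simp: Sall_def)
  have ne2: "resid X v2 \<noteq> {}" using d2(3) sub by (auto simp: Sall_def)
  obtain u where Xu: "X = resid L u" using d1(1) sub by (auto simp: Sall_def)
  have "v1 = v2"
  proof (cases "prefix v1 v2")
    case True
    then obtain t where t: "v2 = v1 @ t" by (auto simp: prefix_def)
    show ?thesis
    proof (rule ccontr)
      assume "v1 \<noteq> v2" then have "t \<noteq> []" using t by auto
      then show False using d2(5)[OF t] d1(2,3) by auto
    qed
  next
    case F1: False
    show ?thesis
    proof (cases "prefix v2 v1")
      case True
      then obtain t where t: "v1 = v2 @ t" by (auto simp: prefix_def)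
      show ?thesis
      proof (rule ccontr)
        assume "v1 \<noteq> v2" then have "t \<noteq> []" using t by auto
        then show False using d1(5)[OF t] d2(2,3) by auto
      qed
    next
      case False
      then have "v1 \<parallel> v2" using F1 by (simp add: parallel_def)
      then obtain as b bs c cs where d: "b \<noteq> c" "v1 = as @ b # bs" "v2 = as @ c # cs"
        using parallel_decomp by blast
      have asne: "as \<noteq> []" using d h by auto
      obtain z1 where z1: "z1 \<in> resid X v1" using ne1 by auto
      obtain z2 where z2: "z2 \<in> resid X v2" using ne2 by auto
      have br: "b # (bs @ z1) \<in> resid X as" "c # (cs @ z2) \<in> resid X as"
        using d z1 z2 by (auto simp: resid_def)
      have "special_resid L (resid X as)"
        apply (rule special_intro[of _ _ "u @ as"])
        using br d(1) by (auto simp: Xu resid_append)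
      hence "resid X as \<in> S" using sub by (auto simp: Ssp_def)
      then show ?thesis using d1(5)[OF d(2) asne] by auto
    qed
  qed
  then show ?thesis using d1(4) d2(4) by simp
qed

lemma reach_aut:
  assumes sub: "Ssp L \<subseteq> S" "S \<subseteq> Sall L"
  shows "X \<in> S \<Longrightarrow> resid X w \<in> S \<Longrightarrow> reach (aut L S) X (resid X w)"
proof (induction "length w" arbitrary: w X rule: less_induct)
  case less
  show ?case
  proof (cases "w = []")
    case True
    then show ?thesis using less by (auto intro: reach.refl simp: aut_def)
  next
    case False
    from first_hit[of w "\<lambda>v. resid X v \<in> S", OF False less(3)] obtain v w' where
      h: "w = v @ w'" "v \<noteq> []" "resid X v \<in> S"
      "\<forall>v' v''. v = v' @ v'' \<and> v' \<noteq> [] \<and> v'' \<noteq> [] \<longrightarrow> resid X v' \<notin> S" by blast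
    have e: "(X, v, resid X v) \<in> cedges (aut L S)"
      unfolding aut_def using EE_I[of X S v] less(2) h by auto
    have "length w' < length w" using h by simp
    moreover have "resid (resid X v) w' \<in> S" using less(3) h by (simp add: resid_append)
    ultimately have "reach (aut L S) (resid X v) (resid (resid X v) w')"
      using less(1) h(3) by blast
    then show ?thesis using reach.step[OF e] h(1) by (simp add: resid_append)
  qed
qed

lemma nonspecial_props:
  assumes sub: "Ssp L \<subseteq> S" "S \<subseteq> Sall L" and q: "q \<in> S" "q \<notin> Ssp L"
  shows "q \<noteq> L" "[] \<notin> q" "\<And>a b x y. a # x \<in> q \<Longrightarrow> b # y \<in> q \<Longrightarrow> a = b"
proof -
  obtain u where qu: "q = resid L u" "q \<noteq> {}" using q sub unfolding Sall_def by blast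
  have ns: "\<not> special_resid L q" using q by (simp add: Ssp_def)
  show "q \<noteq> L" using special_intro[OF qu] ns by blast
  show "[] \<notin> q" using special_intro[OF qu] ns by blast
  show "\<And>a b x y. a # x \<in> q \<Longrightarrow> b # y \<in> q \<Longrightarrow> a = b" using special_intro[OF qu] ns by blast
qed

lemma hd_in:
  assumes "v \<noteq> []" "resid X v \<noteq> {}"
  shows "\<exists>x. hd v # x \<in> X"
proof -
  obtain z where "z \<in> resid X v" using assms by auto
  then have "v @ z \<in> X" by (simp add: mem_resid)
  then show ?thesis using assms(1) by (cases v) auto
qed

lemma S_ne:
  assumes "S \<subseteq> Sall L" "X \<in> S" shows "X \<noteq> {}"
  using assms by (auto simp: Sall_def)

lemma red_step:
  assumes sub: "Ssp L \<subseteq> S" "S \<subseteq> Sall L" and q: "q \<in> S" "q \<notin> Ssp L"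
  shows "elem_red_at (aut L S) q (aut L (S - {q}))"
proof -
  note np = nonspecial_props[OF sub q]
  obtain u0 where qu: "q = resid L u0" "q \<noteq> {}" using q sub unfolding Sall_def by blast
  have Lne: "L \<noteq> {}" using qu by (auto simp: resid_def)
  have LS: "L \<in> S" using sub special_intro[of L L "[]"] Lne by (auto simp: Ssp_def)
  have termS: "resid L u \<in> S" if "u \<in> L" for u
  proof -
    have "[] \<in> resid L u" using that by (simp add: mem_resid)
    then have "special_resid L (resid L u)" using special_intro[of "resid L u" L u] by blast
    then show ?thesis using sub by (auto simp: Ssp_def)
  qed
  have detq: "v1 = v2 \<and> Y1 = Y2" if "(q, v1, Y1) \<in> EE S" "(q, v2, Y2) \<in> EE S" for v1 v2 Y1 Y2
  proof -
    have "\<exists>x. hd v1 # x \<in> q"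
      by (rule hd_in[OF EE_D(2)[OF that(1)] S_ne[OF sub(2) EE_D(3)[OF that(1)]]])
    moreover have "\<exists>x. hd v2 # x \<in> q"
      by (rule hd_in[OF EE_D(2)[OF that(2)] S_ne[OF sub(2) EE_D(3)[OF that(2)]]])
    ultimately have "hd v1 = hd v2" using np(3) by blast
    then show ?thesis using det_EE[OF sub that] by blast
  qed
  obtain w where w: "w \<in> q" using qu by auto
  have wne: "w \<noteq> []" using w np(2) by auto
  have rw: "resid q w \<in> S"
  proof -
    have "u0 @ w \<in> L" using w qu by (simp add: mem_resid)
    from termS[OF this] show ?thesis by (simp add: qu resid_append)
  qed
  from first_hit[of w "\<lambda>v. resid q v \<in> S", OF wne rw] obtain v w' where
    hv: "w = v @ w'" "v \<noteq> []" "resid q v \<in> S"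
      "\<forall>v' v''. v = v' @ v'' \<and> v' \<noteq> [] \<and> v'' \<noteq> [] \<longrightarrow> resid q v' \<notin> S" by blast
  define r where "r = resid q v"
  have qe: "(q, v, r) \<in> EE S" unfolding r_def using EE_I[of q S v] q hv by auto
  have rq: "r \<noteq> q"
  proof
    assume rq: "r = q"
    have "\<forall>w. w \<notin> q"
    proof
      fix w show "w \<notin> q"
      proof (induction "length w" arbitrary: w rule: less_induct)
        case less
        show ?case
        proof
          assume wq: "w \<in> q"
          have wne: "w \<noteq> []" using wq np(2) by auto
          have rw: "resid q w \<in> S"
          proof -
            have "u0 @ w \<in> L" using wq qu by (simp add: mem_resid)
            from termS[OF this] show ?thesis by (simp add: qu resid_append)
          qed
          from first_hit[of w "\<lambda>v. resid q v \<in> S", OF wne rw] obtain v2 w2 where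
            h2: "w = v2 @ w2" "v2 \<noteq> []" "resid q v2 \<in> S"
            "\<forall>v' v''. v2 = v' @ v'' \<and> v' \<noteq> [] \<and> v'' \<noteq> [] \<longrightarrow> resid q v' \<notin> S" by blast
          have "(q, v2, resid q v2) \<in> EE S" using EE_I[of q S v2] q h2 by auto
          from detq[OF this qe] have "v2 = v" "resid q v2 = r" by auto
          then have "w2 \<in> q" using wq h2(1) rq r_def by (simp add: mem_resid[symmetric] resid_append)
          moreover have "length w2 < length w" using h2 by simp
          ultimately show False using less by blast
        qed
      qed
    qed
    then show False using qu by auto
  qed
  have rS: "r \<in> S - {q}" using hv rq r_def by auto
  have edges: "EE (S - {q}) = {(p, w, r'). (p, w, r') \<in> EE S \<and> p \<noteq> q \<and> r' \<noteq> q}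
                       \<union> {(p, u @ v, r) | p u. (p, u, q) \<in> EE S}" (is "?A = ?B")
  proof
    show "?B \<subseteq> ?A"
    proof
      fix e assume "e \<in> ?B"
      then consider (a) p w' r' where "e = (p, w', r')" "(p, w', r') \<in> EE S" "p \<noteq> q" "r' \<noteq> q"
        | (b) p u where "e = (p, u @ v, r)" "(p, u, q) \<in> EE S" by blast
      then show "e \<in> ?A"
      proof cases
        case a
        note d = EE_D[OF a(2)]
        show ?thesis unfolding a(1) d(4)
          apply (rule EE_I) using d a by auto
      next
        case b
        note d = EE_D[OF b(2)]
        have pq: "p \<noteq> q"
        proof
          assume "p = q"
          with b(2) have "(q, u, q) \<in> EE S" by simp
          from detq[OF this qe] rq show False by simp
        qed
        have rr: "resid p (u @ v) = r" using d(4) r_def by (simp add: resid_append)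
        have "(p, u @ v, resid p (u @ v)) \<in> ?A"
        proof (rule EE_I)
          show "p \<in> S - {q}" using d pq by auto
          show "u @ v \<noteq> []" using d by auto
          show "resid p (u @ v) \<in> S - {q}" using rr rS by simp
          fix v' v'' assume h: "u @ v = v' @ v''" "v' \<noteq> []" "v'' \<noteq> []"
          from h(1) obtain us where us: "(u = v' @ us \<and> us @ v = v'') \<or> (u @ us = v' \<and> v = us @ v'')"
            by (auto simp: append_eq_append_conv2)
          then show "resid p v' \<notin> S - {q}"
          proof
            assume c: "u = v' @ us \<and> us @ v = v''"
            show ?thesis
            proof (cases "us = []")
              case True then show ?thesis using c d(4) by auto
            next
              case False then show ?thesis using c d(5)[of v' us] h(2) by auto
            qed
          next
            assume c: "u @ us = v' \<and> v = us @ v''"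
            show ?thesis
            proof (cases "us = []")
              case True then show ?thesis using c d(4) by auto
            next
              case False
              have "resid q us \<notin> S" using hv(4) c h(3) False by auto
              then show ?thesis using c d(4) by (auto simp: resid_append)
            qed
          qed
        qed
        then show ?thesis using b(1) rr by simp
      qed
    qed
  next
    show "?A \<subseteq> ?B"
    proof
      fix e assume eA: "e \<in> ?A"
      then obtain p w where e: "e = (p, w, resid p w)" by (auto simp: EE_def)
      note d = EE_D[OF eA[unfolded e]]
      from first_hit[of w "\<lambda>v. resid p v \<in> S", OF d(2)] d(3) obtain v0 w' where
        h0: "w = v0 @ w'" "v0 \<noteq> []" "resid p v0 \<in> S"
        "\<forall>v' v''. v0 = v' @ v'' \<and> v' \<noteq> [] \<and> v'' \<noteq> [] \<longrightarrow> resid p v' \<notin> S" by auto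
      show "e \<in> ?B"
      proof (cases "w' = []")
        case True
        have "(p, w, resid p w) \<in> EE S" using EE_I[of p S w] h0 True d by auto
        then show ?thesis using e d by auto
      next
        case False
        have "resid p v0 \<notin> S - {q}" using d(5)[OF h0(1) h0(2) False] .
        then have pv0: "resid p v0 = q" using h0(3) by auto
        have e0: "(p, v0, q) \<in> EE S" using EE_I[of p S v0] h0 d pv0 by auto
        have rq': "resid q w' \<in> S" using d(3) h0(1) pv0 by (simp add: resid_append)
        from first_hit[of w' "\<lambda>v. resid q v \<in> S", OF False rq'] obtain v1 w'' where
          h1: "w' = v1 @ w''" "v1 \<noteq> []" "resid q v1 \<in> S"
          "\<forall>v' v''. v1 = v' @ v'' \<and> v' \<noteq> [] \<and> v'' \<noteq> [] \<longrightarrow> resid q v' \<notin> S" by blast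
        have "(q, v1, resid q v1) \<in> EE S" using EE_I[of q S v1] q h1 by auto
        from detq[OF this qe] have v1v: "v1 = v" "resid q v1 = r" by auto
        have w'': "w'' = []"
        proof (rule ccontr)
          assume "w'' \<noteq> []"
          then have "resid p (v0 @ v) \<notin> S - {q}" using d(5)[of "v0 @ v" w''] h0 h1 v1v by auto
          moreover have "resid p (v0 @ v) = r" using pv0 r_def by (simp add: resid_append)
          ultimately show False using rS by simp
        qed
        have "resid p w = r" using h0(1) h1(1) w'' v1v pv0 r_def by (simp add: resid_append)
        then show ?thesis using e e0 h0(1) h1(1) w'' v1v by auto
      qed
    qed
  qed
  have wf: "wf_cauto (aut L S)"
    unfolding wf_cauto_def aut_def using LS termS by (auto simp: EE_def)
  have trim: "trim (aut L S)"
    unfolding trim_def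
  proof
    fix X assume "X \<in> cstates (aut L S)"
    then have X: "X \<in> S" by (simp add: aut_def)
    obtain u where Xu: "X = resid L u" "X \<noteq> {}" using X sub unfolding Sall_def by blast
    obtain z where z: "z \<in> X" using Xu by auto
    have uz: "u @ z \<in> L" using z Xu by (simp add: mem_resid)
    have r1: "reach (aut L S) L X"
      using reach_aut[OF sub LS, of u] X Xu by simp
    have r2: "reach (aut L S) X (resid X z)"
      using reach_aut[OF sub X, of z] termS[OF uz] Xu by (simp add: resid_append)
    have "resid X z \<in> cterm (aut L S)" using uz Xu by (auto simp: aut_def resid_append)
    moreover have "L \<in> cinit (aut L S)" using Lne by (simp add: aut_def)
    ultimately show "\<exists>i\<in>cinit (aut L S). \<exists>t\<in>cterm (aut L S). reach (aut L S) i X \<and> reach (aut L S) X t"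
      using r1 r2 by blast
  qed
  have det: "deterministic (aut L S)"
    unfolding deterministic_def
  proof
    have "cinit (aut L S) = {L}" using Lne by (auto simp: aut_def)
    then show "card (cinit (aut L S)) = 1" by simp
    show "\<forall>e1\<in>cedges (aut L S). \<forall>e2\<in>cedges (aut L S).
      fst e1 = fst e2 \<and> e1 \<noteq> e2 \<longrightarrow> hd (fst (snd e1)) \<noteq> hd (fst (snd e2))"
    proof (intro ballI impI)
      fix e1 e2 assume e1: "e1 \<in> cedges (aut L S)" and e2: "e2 \<in> cedges (aut L S)"
        and c: "fst e1 = fst e2 \<and> e1 \<noteq> e2"
      obtain X1 v1 Y1 where 1: "e1 = (X1, v1, Y1)" by (cases e1) auto
      obtain X2 v2 Y2 where 2: "e2 = (X2, v2, Y2)" by (cases e2) auto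
      show "hd (fst (snd e1)) \<noteq> hd (fst (snd e2))"
      proof
        assume "hd (fst (snd e1)) = hd (fst (snd e2))"
        then have hh: "hd v1 = hd v2" using 1 2 by simp
        have ee: "(X1, v1, Y1) \<in> EE S" "(X1, v2, Y2) \<in> EE S"
          using e1 e2 c 1 2 by (auto simp: aut_def)
        have "v1 = v2 \<and> Y1 = Y2" by (rule det_EE[OF sub ee hh])
        then show False using c 1 2 by simp
      qed
    qed
  qed
  have ns: "\<not> special_state (aut L S) q"
    unfolding special_state_def
  proof (intro notI, elim disjE exE conjE)
    assume "q \<in> cinit (aut L S)" then show False using np(1) by (simp add: aut_def)
  next
    assume "q \<in> cterm (aut L S)" then show False using np(2) by (auto simp: aut_def mem_resid)
  next
    fix u1 r1 v1 r1'
    assume a: "(q, u1, r1) \<in> cedges (aut L S)" "(q, v1, r1') \<in> cedges (aut L S)" "hd u1 \<noteq> hd v1"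
    have a1: "(q, u1, r1) \<in> EE S" and a2: "(q, v1, r1') \<in> EE S" using a by (simp_all add: aut_def)
    have "\<exists>x. hd u1 # x \<in> q"
      by (rule hd_in[OF EE_D(2)[OF a1] S_ne[OF sub(2) EE_D(3)[OF a1]]])
    moreover have "\<exists>x. hd v1 # x \<in> q"
      by (rule hd_in[OF EE_D(2)[OF a2] S_ne[OF sub(2) EE_D(3)[OF a2]]])
    ultimately show False using np(3) a(3) by blast
  qed
  show ?thesis
    unfolding elem_red_at_def
    apply (intro conjI wf trim det ns)
     apply (simp add: aut_def q)
    apply (rule exI[of _ v], rule exI[of _ r])
    using qe edges by (simp add: aut_def)
qed

lemma red_chain:
  assumes "finite (S - Ssp L)" "Ssp L \<subseteq> S" "S \<subseteq> Sall L"
  shows "elem_red\<^sup>*\<^sup>* (aut L S) (aut L (Ssp L))"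
  using assms
proof (induction "card (S - Ssp L)" arbitrary: S)
  case 0
  then have "S = Ssp L" by auto
  then show ?case by simp
next
  case (Suc n)
  have "S - Ssp L \<noteq> {}" using Suc(2) by (metis card.empty nat.distinct(1))
  then obtain q where q: "q \<in> S" "q \<notin> Ssp L" by blast
  have "elem_red (aut L S) (aut L (S - {q}))"
    using red_step[OF Suc(4,5) q] by (auto simp: elem_red_def)
  moreover have "elem_red\<^sup>*\<^sup>* (aut L (S - {q})) (aut L (Ssp L))"
  proof (rule Suc(1))
    have "S - {q} - Ssp L = (S - Ssp L) - {q}" by auto
    then show "n = card (S - {q} - Ssp L)" using Suc(2,3) q by simp
    show "finite (S - {q} - Ssp L)" using Suc(3) by (metis Diff_mono finite_subset order_refl Diff_subset)
    show "Ssp L \<subseteq> S - {q}" using Suc(4) q by auto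
    show "S - {q} \<subseteq> Sall L" using Suc(5) by auto
  qed
  ultimately show ?case by (rule converse_rtranclp_into_rtranclp)
qed

lemma finite_Sall:
  assumes "recognizable L" shows "finite (Sall L)"
proof -
  obtain Q :: "nat set" and \<delta> q0 F where h: "finite Q" "q0 \<in> Q" "\<forall>q \<in> Q. \<forall>a. \<delta> q a \<in> Q"
     "L = {w. foldl \<delta> q0 w \<in> F}"
    using assms unfolding recognizable_def by blast
  have cl: "\<forall>q \<in> Q. foldl \<delta> q u \<in> Q" for u
    by (induction u) (use h(3) in auto)
  have "Sall L \<subseteq> (\<lambda>q. {w. foldl \<delta> q w \<in> F}) ` Q"
  proof
    fix X assume "X \<in> Sall L"
    then obtain u where "X = resid L u" by (auto simp: Sall_def)
    then have "X = {w. foldl \<delta> (foldl \<delta> q0 u) w \<in> F}" by (simp add: h(4) resid_def)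
    then show "X \<in> (\<lambda>q. {w. foldl \<delta> q w \<in> F}) ` Q" using cl h(2) by blast
  qed
  then show ?thesis using h(1) finite_subset by blast
qed

lemma minA_eq: "minA L = aut L (Sall L)"
proof -
  have "{(resid L u, [a], resid L (u @ [a])) | u a. resid L (u @ [a]) \<noteq> {}} = EE (Sall L)"
  proof
    show "EE (Sall L) \<subseteq> {(resid L u, [a], resid L (u @ [a])) | u a. resid L (u @ [a]) \<noteq> {}}"
    proof
      fix e assume e: "e \<in> EE (Sall L)"
      then obtain X v where ev: "e = (X, v, resid X v)" by (auto simp: EE_def)
      note d = EE_D[OF e[unfolded ev]]
      obtain u where Xu: "X = resid L u" using d(1) by (auto simp: Sall_def)
      obtain a t where v: "v = a # t" using d(2) by (cases v) auto
      have ne: "resid X v \<noteq> {}" using d(3) by (auto simp: Sall_def)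
      have t: "t = []"
      proof (rule ccontr)
        assume "t \<noteq> []"
        moreover have "resid X [a] \<in> Sall L"
          using ne unfolding Sall_def by (auto simp: Xu resid_append[symmetric] v mem_resid intro!: exI[of _ "u @ [a]"])
        ultimately show False using d(5)[of "[a]" t] v by auto
      qed
      show "e \<in> {(resid L u, [a], resid L (u @ [a])) | u a. resid L (u @ [a]) \<noteq> {}}"
        using ev Xu v t ne by (auto simp: resid_append)
    qed
    show "{(resid L u, [a], resid L (u @ [a])) | u a. resid L (u @ [a]) \<noteq> {}} \<subseteq> EE (Sall L)"
    proof clarify
      fix u a assume ne: "resid L (u @ [a]) \<noteq> {}"
      have "resid L u \<noteq> {}" using ne by (auto simp: resid_def)
      then have "(resid L u, [a], resid (resid L u) [a]) \<in> EE (Sall L)"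
        apply (intro EE_I)
        using ne by (auto simp: Sall_def resid_append[symmetric] Cons_eq_append_conv)
      then show "(resid L u, [a], resid L (u @ [a])) \<in> EE (Sall L)" by (simp add: resid_append)
    qed
  qed
  moreover have "{resid L u | u. resid L u \<noteq> {}} = Sall L" by (auto simp: Sall_def)
  ultimately show ?thesis by (simp add: minA_def aut_def)
qed

lemma minAc_eq: "minAc L = aut L (Ssp L)"
proof -
  have "{(resid L u, v, resid L (u @ v)) | u v. v \<noteq> [] \<and>
           special_resid L (resid L u) \<and> special_resid L (resid L (u @ v)) \<and>
           (\<forall>v' v''. v = v' @ v'' \<and> v' \<noteq> [] \<and> v'' \<noteq> [] \<longrightarrow>
               \<not> special_resid L (resid L (u @ v')))} = EE (Ssp L)" (is "?R = ?E")
  proof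
    show "EE (Ssp L) \<subseteq> ?R"
    proof
      fix e assume e: "e \<in> EE (Ssp L)"
      then obtain X v where ev: "e = (X, v, resid X v)" by (auto simp: EE_def)
      note d = EE_D[OF e[unfolded ev]]
      obtain u where Xu: "X = resid L u" using d(1) special_elim unfolding Ssp_def Sall_def by blast
      show "e \<in> ?R" using ev d Xu by (auto simp: resid_append Ssp_def)
    qed
    show "?R \<subseteq> EE (Ssp L)"
    proof clarify
      fix u v assume h: "v \<noteq> []" "special_resid L (resid L u)" "special_resid L (resid L (u @ v))"
        "\<forall>v' v''. v = v' @ v'' \<and> v' \<noteq> [] \<and> v'' \<noteq> [] \<longrightarrow> \<not> special_resid L (resid L (u @ v'))"
      have "(resid L u, v, resid (resid L u) v) \<in> EE (Ssp L)"
        apply (intro EE_I) using h by (auto simp: Ssp_def resid_append)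
      then show "(resid L u, v, resid L (u @ v)) \<in> EE (Ssp L)" by (simp add: resid_append)
    qed
  qed
  moreover have "{X. special_resid L X} = Ssp L" by (simp add: Ssp_def)
  ultimately show ?thesis by (simp add: minAc_def aut_def)
qed

theorem mainTheorem13:
  fixes L :: "'a list set"
  assumes "recognizable L"
  shows "\<exists>B. elem_red\<^sup>*\<^sup>* (minA L) B \<and> cauto_iso B (minAc L)"
proof -
  have sub: "Ssp L \<subseteq> Sall L" using special_elim by (auto simp: Ssp_def)
  have "elem_red\<^sup>*\<^sup>* (aut L (Sall L)) (aut L (Ssp L))"
    using red_chain[of "Sall L" L] finite_Sall[OF assms] sub by auto
  moreover have "cauto_iso (minAc L) (minAc L)"
    unfolding cauto_iso_def by (intro exI[of _ id]) auto
  ultimately show ?thesis using minA_eq minAc_eq by metis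
qed

end
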